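(* Let $\mathcal{L}$ be a nonempty set and $\mathcal{C}: 2^{\mathcal{L}}\to 2^{\mathcal{L}}$ an L-logics. Let $n\ge 1$ and let $T_0,\dots,T_{n-1}$ be theories with $T_0\le T_1$, $T_1\le T_2$, $\dots$, $T_{n-2}\le T_{n-1}$, $T_{n-1}\le T_0$. Then $T_0=T_1=\dots=T_{n-1}$.
   Context: An L-logics is a map $\mathcal{C}: 2^{\mathcal{L}}\to 2^{\mathcal{L}}$ satisfying Inclusion ($A\subseteq\mathcal{C}(A)$ for all $A$) and Loop: for every $n\ge1$ and $A_0,\dots,A_{n-1}\subseteq\mathcal{L}$, if $A_i\subseteq\mathcal{C}(A_{i+1})$ for all $i=0,\dots,n-1$ (indices mod $n$) then $\mathcal{C}(A_0)=\mathcal{C}(A_1)$. A theory is a set $T\subseteq\mathcal{L}$ with $\mathcal{C}(T)=T$. For theories $T,S$: $T\le S$ iff there is $A\subseteq S$ with $\mathcal{C}(A)=T$. *)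

theory Defs
  imports Main
begin

definition l_logics :: "'a set \<Rightarrow> ('a set \<Rightarrow> 'a set) \<Rightarrow> bool" where
  "l_logics L C \<longleftrightarrow>
     (\<forall>A. A \<subseteq> L \<longrightarrow> C A \<subseteq> L) \<and>
     (\<forall>A. A \<subseteq> L \<longrightarrow> A \<subseteq> C A) \<and>
     (\<forall>(n::nat) (As::nat \<Rightarrow> 'a set). n \<ge> 1 \<longrightarrow> (\<forall>i<n. As i \<subseteq> L) \<longrightarrow>
        (\<forall>i<n. As i \<subseteq> C (As ((i + 1) mod n))) \<longrightarrow> C (As 0) = C (As (1 mod n)))"

definition is_theory :: "'a set \<Rightarrow> ('a set \<Rightarrow> 'a set) \<Rightarrow> 'a set \<Rightarrow> bool" where
  "is_theory L C T \<longleftrightarrow> T \<subseteq> L \<and> C T = T"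

definition theory_le :: "('a set \<Rightarrow> 'a set) \<Rightarrow> 'a set \<Rightarrow> 'a set \<Rightarrow> bool" where
  "theory_le C T S \<longleftrightarrow> (\<exists>A. A \<subseteq> S \<and> C A = T)"

end

theory Submission
  imports Defs
begin

theorem lemma18:
  fixes L :: "'a set" and C :: "'a set \<Rightarrow> 'a set" and n :: nat and T :: "nat \<Rightarrow> 'a set"
  assumes "L \<noteq> {}"
    and "l_logics L C"
    and "n \<ge> 1"
    and "\<forall>i<n. is_theory L C (T i)"
    and "\<forall>i<n. theory_le C (T i) (T ((i + 1) mod n))"
  shows "\<forall>i<n. \<forall>j<n. T i = T j"
proof -
  have "\<forall>i. \<exists>A. i < n \<longrightarrow> A \<subseteq> T ((i + 1) mod n) \<and> C A = T i"
    using assms(5) unfolding theory_le_def by blast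
  then obtain A where A: "\<And>i. i < n \<Longrightarrow> A i \<subseteq> T ((i + 1) mod n) \<and> C (A i) = T i"
    by metis
  have npos: "n > 0" using assms(3) by simp
  have TL: "\<And>i. i < n \<Longrightarrow> T i \<subseteq> L" using assms(4) unfolding is_theory_def by blast
  have loop: "\<And>(As :: nat \<Rightarrow> 'a set) (m::nat). m \<ge> 1 \<Longrightarrow> (\<forall>i<m. As i \<subseteq> L) \<Longrightarrow>
        (\<forall>i<m. As i \<subseteq> C (As ((i + 1) mod m))) \<Longrightarrow> C (As 0) = C (As (1 mod m))"
  proof -
    fix As :: "nat \<Rightarrow> 'a set" and m :: nat
    assume h: "m \<ge> 1" "\<forall>i<m. As i \<subseteq> L" "\<forall>i<m. As i \<subseteq> C (As ((i + 1) mod m))"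
    have L3: "\<forall>(n::nat) (As::nat \<Rightarrow> 'a set). n \<ge> 1 \<longrightarrow> (\<forall>i<n. As i \<subseteq> L) \<longrightarrow>
        (\<forall>i<n. As i \<subseteq> C (As ((i + 1) mod n))) \<longrightarrow> C (As 0) = C (As (1 mod n))"
      using assms(2) unfolding l_logics_def by (rule conjunct2[OF conjunct2])
    show "C (As 0) = C (As (1 mod m))" using L3 h by blast
  qed
  have step: "T i = T ((i + 1) mod n)" if "i < n" for i
  proof -
    define As where "As k = A ((k + i) mod n)" for k
    have m: "((k + i) mod n + 1) mod n = ((k + 1) mod n + i) mod n" for k
      by (simp add: mod_simps)
    have "\<forall>k<n. As k \<subseteq> L"
    proof (intro allI impI)
      fix k assume "k < n"
      have "(k + i) mod n < n" using npos by simp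
      then show "As k \<subseteq> L" unfolding As_def using A[OF \<open>(k + i) mod n < n\<close>] TL[of "((k + i) mod n + 1) mod n"] npos by auto
    qed
    moreover have "\<forall>k<n. As k \<subseteq> C (As ((k + 1) mod n))"
    proof (intro allI impI)
      fix k assume "k < n"
      have lt: "(k + i) mod n < n" using npos by simp
      have lt2: "((k + 1) mod n + i) mod n < n" using npos by simp
      have "As k \<subseteq> T (((k + i) mod n + 1) mod n)" unfolding As_def using A lt by blast
      also have "\<dots> = C (As ((k + 1) mod n))" unfolding As_def m using A[OF lt2] by simp
      finally show "As k \<subseteq> C (As ((k + 1) mod n))" .
    qed
    ultimately have "C (As 0) = C (As (1 mod n))" using loop[of n As] assms(3) by blast
    moreover have "C (As 0) = T i" unfolding As_def using A[OF that] that by simp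
    moreover have "C (As (1 mod n)) = T ((i + 1) mod n)"
      proof -
      have e: "(1 mod n + i) mod n = (i + 1) mod n" by (simp add: mod_simps add.commute)
      have "(i + 1) mod n < n" using npos by simp
      then show ?thesis unfolding As_def e using A by blast
    qed
    ultimately show ?thesis by simp
  qed
  have all: "i < n \<Longrightarrow> T i = T 0" for i
  proof (induction i)
    case 0 then show ?case by simp
  next
    case (Suc i)
    then have "T (Suc i) = T i" using step[of i] by simp
    with Suc show ?case by simp
  qed
  show ?thesis using all by (metis (no_types))
qed

end
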